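(* Let $N$ be a pWF net with a transition $t^*$, and let $N^*$ be the pWF net consisting of a single fresh place $p^*$ (no transitions, no edges, input and output set $\{p^*\}$), so that $\mathrm{tc}(N^* )$ is the tWF net $t_i\to p^*\to t_o$ with fresh transitions $t_i,t_o$. If $N$ is sub-sound, then $N\otimes_{t^*}\mathrm{tc}(N^* )$ is sub-sound.
   Context: Petri nets and markings. A Petri net is a triple $(P,T,F)$ with $P$ a finite set of places, $T$ a finite set of transitions, $P\cap T=\emptyset$, and $F\subseteq (P\times T)\cup(T\times P)$. For a node $x$, $\bullet x=\{y\mid (y,x)\in F\}$, $x\bullet=\{y\mid (x,y)\in F\}$. A marking is a multiset over $P$ (a function $P\to\mathbb N$); sets of places are identified with bags of multiplicity one, $+,-,\le$ are pointwise, and $k.m$ is the sum of $k$ copies of $m$. Transition $t$ is enabled at $m$ iff $\bullet t\le m$, firing gives $m-\bullet t+t\bullet$, and $m\xrightarrow{*}m'$ denotes reachability by a finite (possibly empty) firing sequence. Workflow nets. A pWF net is $(P,T,F,I,O)$ with $(P,T,F)$ a Petri net, $I,O\subseteq P$ non-empty, every node reachable by a directed path from some node of $I$, and some node of $O$ reachable from every node. A tWF net is the same with $I,O$ non-empty subsets of $T$. Input nodes may have incoming edges and output nodes outgoing edges. The transition-completion $\mathrm{tc}(N)$ of a pWF net $N=(P,T,F,I,O)$ is obtained by adding two fresh transitions $t_i,t_o$ with $t_i\bullet=I$, $\bullet t_i=\emptyset$, $\bullet t_o=O$, $t_o\bullet=\emptyset$, and taking input set $\{t_i\}$ and output set $\{t_o\}$.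 Sub-soundness. A pWF net is sub-sound if for all integers $k\ge k'\ge 0$ and every marking $m'$: if $k.I\xrightarrow{*}m'+k'.O$ then $m'\xrightarrow{*}(k-k').O$. Transition substitution. For a WF net $N=(P,T,F,I,O)$ and a tWF net $M=(P',T',F',I',O')$ with disjoint node sets and $t\in T$, $N\otimes_t M$ is obtained from $N$ by deleting $t$ and all edges incident to $t$, adding all nodes and edges of $M$, adding an edge $(q,t')$ for each $q\in\bullet_N t$ and $t'\in I'$, and an edge $(t',q)$ for each $t'\in O'$ and $q\in t\bullet_N$; its input set is $(I\setminus\{t\})\cup I'$ if $t\in I$ and $I$ otherwise, and its output set is $(O\setminus\{t\})\cup O'$ if $t\in O$ and $O$ otherwise. *)

theory Defs
  imports Main "HOL-Library.Multiset"
begin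

record 'a wf_net =
  places :: "'a set"
  trans  :: "'a set"
  flow   :: "('a \<times> 'a) set"
  inp    :: "'a set"
  outp   :: "'a set"

definition petri_net :: "'a wf_net \<Rightarrow> bool" where
  "petri_net N \<longleftrightarrow> finite (places N) \<and> finite (trans N) \<and>
     places N \<inter> trans N = {} \<and>
     flow N \<subseteq> (places N \<times> trans N) \<union> (trans N \<times> places N)"

definition preset :: "'a wf_net \<Rightarrow> 'a \<Rightarrow> 'a set" where
  "preset N x = {y. (y, x) \<in> flow N}"

definition postset :: "'a wf_net \<Rightarrow> 'a \<Rightarrow> 'a set" where
  "postset N x = {y. (x, y) \<in> flow N}"

definition wf_connected :: "'a wf_net \<Rightarrow> bool" where
  "wf_connected N \<longleftrightarrow>
     (\<forall>x \<in> places N \<union> trans N. \<exists>i \<in> inp N. (i, x) \<in> (flow N)\<^sup>*) \<and>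
     (\<forall>x \<in> places N \<union> trans N. \<exists>q \<in> outp N. (x, q) \<in> (flow N)\<^sup>*)"

definition pWF :: "'a wf_net \<Rightarrow> bool" where
  "pWF N \<longleftrightarrow> petri_net N \<and> inp N \<subseteq> places N \<and> inp N \<noteq> {} \<and>
     outp N \<subseteq> places N \<and> outp N \<noteq> {} \<and> wf_connected N"

definition tWF :: "'a wf_net \<Rightarrow> bool" where
  "tWF N \<longleftrightarrow> petri_net N \<and> inp N \<subseteq> trans N \<and> inp N \<noteq> {} \<and>
     outp N \<subseteq> trans N \<and> outp N \<noteq> {} \<and> wf_connected N"

text \<open>Markings are multisets of nodes; a set is identified with the bag of multiplicity one.\<close>
definition enabled :: "'a wf_net \<Rightarrow> 'a \<Rightarrow> 'a multiset \<Rightarrow> bool" where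
  "enabled N t m \<longleftrightarrow> t \<in> trans N \<and> mset_set (preset N t) \<subseteq># m"

definition fire :: "'a wf_net \<Rightarrow> 'a \<Rightarrow> 'a multiset \<Rightarrow> 'a multiset" where
  "fire N t m = m - mset_set (preset N t) + mset_set (postset N t)"

definition step :: "'a wf_net \<Rightarrow> 'a multiset \<Rightarrow> 'a multiset \<Rightarrow> bool" where
  "step N m m' \<longleftrightarrow> (\<exists>t. enabled N t m \<and> m' = fire N t m)"

definition reach :: "'a wf_net \<Rightarrow> 'a multiset \<Rightarrow> 'a multiset \<Rightarrow> bool" where
  "reach N = (step N)\<^sup>*\<^sup>*"

definition sub_sound :: "'a wf_net \<Rightarrow> bool" where
  "sub_sound N \<longleftrightarrow>
     (\<forall>k k' m'. k' \<le> k \<longrightarrow>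
        reach N (repeat_mset k (mset_set (inp N))) (m' + repeat_mset k' (mset_set (outp N))) \<longrightarrow>
        reach N m' (repeat_mset (k - k') (mset_set (outp N))))"

definition tc :: "'a wf_net \<Rightarrow> 'a \<Rightarrow> 'a \<Rightarrow> 'a wf_net" where
  "tc N ti to = \<lparr> places = places N, trans = trans N \<union> {ti, to},
     flow = flow N \<union> {(ti, i) | i. i \<in> inp N} \<union> {(q, to) | q. q \<in> outp N},
     inp = {ti}, outp = {to} \<rparr>"

definition tsubst :: "'a wf_net \<Rightarrow> 'a \<Rightarrow> 'a wf_net \<Rightarrow> 'a wf_net" where
  "tsubst N t M = \<lparr> places = places N \<union> places M,
     trans = (trans N - {t}) \<union> trans M,
     flow = {e \<in> flow N. fst e \<noteq> t \<and> snd e \<noteq> t} \<union> flow M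
            \<union> {(q, t') | q t'. q \<in> preset N t \<and> t' \<in> inp M}
            \<union> {(t', q) | t' q. t' \<in> outp M \<and> q \<in> postset N t},
     inp = (if t \<in> inp N then (inp N - {t}) \<union> inp M else inp N),
     outp = (if t \<in> outp N then (outp N - {t}) \<union> outp M else outp N) \<rparr>"

definition single_place_net :: "'a \<Rightarrow> 'a wf_net" where
  "single_place_net p = \<lparr> places = {p}, trans = {}, flow = {}, inp = {p}, outp = {p} \<rparr>"

end

theory Submission imports Defs begin

locale ss =
  fixes N :: "'a wf_net" and tstar ps ti to :: 'a
  assumes pn: "petri_net N" and tstar: "tstar \<in> trans N"
    and ps: "ps \<notin> places N \<union> trans N"
    and ti: "ti \<notin> places N \<union> trans N"
    and to: "to \<notin> places N \<union> trans N"
    and dist: "distinct [ps, ti, to]"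
begin

definition "N' = tsubst N tstar (tc (single_place_net ps) ti to)"

lemma fl: "(x,y) \<in> flow N \<Longrightarrow> (x \<in> places N \<and> y \<in> trans N) \<or> (x \<in> trans N \<and> y \<in> places N)"
  using pn unfolding petri_net_def by auto

lemma disj: "places N \<inter> trans N = {}" using pn unfolding petri_net_def by auto

lemma trans': "trans N' = trans N - {tstar} \<union> {ti,to}"
  unfolding N'_def tsubst_def tc_def single_place_net_def by auto

lemma pre_t: "t \<in> trans N \<Longrightarrow> t \<noteq> tstar \<Longrightarrow> preset N' t = preset N t"
  unfolding N'_def tsubst_def tc_def single_place_net_def preset_def postset_def
  using fl disj ps ti to dist tstar by auto

lemma post_t: "t \<in> trans N \<Longrightarrow> t \<noteq> tstar \<Longrightarrow> postset N' t = postset N t"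
  unfolding N'_def tsubst_def tc_def single_place_net_def preset_def postset_def
  using fl disj ps ti to dist tstar by auto

lemma pre_ti: "preset N' ti = preset N tstar"
  unfolding N'_def tsubst_def tc_def single_place_net_def preset_def postset_def
  using fl disj ps ti to dist tstar by auto

lemma post_ti: "postset N' ti = {ps}"
  unfolding N'_def tsubst_def tc_def single_place_net_def preset_def postset_def
  using fl disj ps ti to dist tstar by auto

lemma pre_to: "preset N' to = {ps}"
  unfolding N'_def tsubst_def tc_def single_place_net_def preset_def postset_def
  using fl disj ps ti to dist tstar by auto

lemma post_to: "postset N' to = postset N tstar"
  unfolding N'_def tsubst_def tc_def single_place_net_def preset_def postset_def
  using fl disj ps ti to dist tstar by auto

lemma pre_sub: "preset N t \<subseteq> places N \<union> trans N" "postset N t \<subseteq> places N \<union> trans N"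
  unfolding preset_def postset_def using fl by auto

lemma pre_fin: "finite (preset N t)" "finite (postset N t)"
  using pn pre_sub unfolding petri_net_def by (meson finite_Un finite_subset)+

lemma ps_notin: "ps \<notin> preset N t" "ps \<notin> postset N t"
  using pre_sub ps by auto


definition "Pre = mset_set (preset N tstar)"
definition "Post = mset_set (postset N tstar)"
definition h :: "'a multiset \<Rightarrow> 'a multiset" where
  "h m = filter_mset (\<lambda>x. x \<noteq> ps) m + repeat_mset (count m ps) Post"

lemma cnt0: "count (mset_set (preset N t)) ps = 0" "count (mset_set (postset N t)) ps = 0"
  using ps_notin pre_fin by (simp_all add: count_eq_zero_iff)

lemma h_fire:
  assumes "A = mset_set (preset N t)" "B = mset_set (postset N t)" "A \<subseteq># m"
  shows "h (m - A + B) = h m - A + B"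
proof -
  have a: "count A ps = 0" "count B ps = 0" using cnt0 assms by auto
  show ?thesis unfolding multiset_eq_iff h_def
  proof
    fix x
    show "count (filter_mset (\<lambda>x. x \<noteq> ps) (m - A + B) + repeat_mset (count (m - A + B) ps) Post) x =
         count (filter_mset (\<lambda>x. x \<noteq> ps) m + repeat_mset (count m ps) Post - A + B) x"
    proof (cases "x = ps")
      case False
      have "count A x \<le> count m x" using assms(3) by (simp add: subseteq_mset_def)
      then show ?thesis using a False by auto
    qed (use a in auto)
  qed
qed

lemma h_ti:
  assumes "Pre \<subseteq># m"
  shows "h (m - Pre + {#ps#}) = h m - Pre + Post"
proof -
  have a: "count Pre ps = 0" "count Post ps = 0" using cnt0 Pre_def Post_def by auto
  show ?thesis unfolding multiset_eq_iff h_def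
  proof
    fix x
    show "count (filter_mset (\<lambda>x. x \<noteq> ps) (m - Pre + {#ps#}) + repeat_mset (count (m - Pre + {#ps#}) ps) Post) x =
         count (filter_mset (\<lambda>x. x \<noteq> ps) m + repeat_mset (count m ps) Post - Pre + Post) x"
      using a assms by (cases "x = ps") (auto simp: subseteq_mset_def algebra_simps)
  qed
qed

lemma h_to:
  assumes "ps \<in># m"
  shows "h (m - {#ps#} + Post) = h m"
proof -
  have a: "count Post ps = 0" using cnt0 Post_def by auto
  show ?thesis unfolding multiset_eq_iff h_def
  proof
    fix x
    show "count (filter_mset (\<lambda>x. x \<noteq> ps) (m - {#ps#} + Post) + repeat_mset (count (m - {#ps#} + Post) ps) Post) x =
         count (filter_mset (\<lambda>x. x \<noteq> ps) m + repeat_mset (count m ps) Post) x"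
      using a assms by (cases "x = ps") (auto dest!: multi_member_split)
  qed
qed


lemma h_add: "h (x + y) = h x + h y"
  unfolding h_def by (simp add: repeat_mset_distrib)

lemma h_id: "ps \<notin># x \<Longrightarrow> h x = x"
proof -
  assume a: "ps \<notin># x"
  hence c: "count x ps = 0" by (simp add: count_eq_zero_iff)
  show ?thesis unfolding h_def multiset_eq_iff using c by auto
qed

lemma sub_h: "A = mset_set (preset N t) \<Longrightarrow> A \<subseteq># a \<Longrightarrow> A \<subseteq># h a"
proof -
  assume A: "A = mset_set (preset N t)" and s: "A \<subseteq># a"
  show ?thesis unfolding subseteq_mset_def
  proof
    fix x
    show "count A x \<le> count (h a) x"
    proof (cases "x = ps")
      case True then show ?thesis using cnt0 A by simp
    next
      case False
      have "count A x \<le> count a x" using s by (simp add: subseteq_mset_def)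
      also have "\<dots> \<le> count (h a) x" using False unfolding h_def by simp
      finally show ?thesis .
    qed
  qed
qed

lemma sim_back: "step N' a b \<Longrightarrow> reach N (h a) (h b)"
proof -
  assume "step N' a b"
  then obtain t where en: "enabled N' t a" and b: "b = fire N' t a" unfolding step_def by auto
  have tt: "t \<in> trans N'" using en unfolding enabled_def by auto
  show ?thesis
  proof (cases "t = ti")
    case True
    have "Pre \<subseteq># a" using en True pre_ti unfolding enabled_def Pre_def by auto
    moreover have "b = a - Pre + {#ps#}" using b True pre_ti post_ti unfolding fire_def Pre_def by auto
    ultimately have "h b = fire N tstar (h a)" "enabled N tstar (h a)"
      using h_ti sub_h tstar unfolding fire_def enabled_def Pre_def Post_def by auto
    then show ?thesis unfolding reach_def step_def by auto
  next
    case nti: False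
    show ?thesis
    proof (cases "t = to")
      case True
      have "ps \<in># a" using en True pre_to unfolding enabled_def by auto
      moreover have "b = a - {#ps#} + Post" using b True pre_to post_to unfolding fire_def Post_def by auto
      ultimately show ?thesis using h_to unfolding reach_def by auto
    next
      case False
      with tt nti have t: "t \<in> trans N" "t \<noteq> tstar" unfolding trans' by auto
      have "mset_set (preset N t) \<subseteq># a" using en t pre_t unfolding enabled_def by auto
      moreover have "b = a - mset_set (preset N t) + mset_set (postset N t)"
        using b t pre_t post_t unfolding fire_def by auto
      ultimately have "h b = fire N t (h a)" "enabled N t (h a)"
        using h_fire sub_h t unfolding fire_def enabled_def by auto
      then show ?thesis unfolding reach_def step_def by auto
    qed
  qed
qed

lemma reach_back: "reach N' a b \<Longrightarrow> reach N (h a) (h b)"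
  unfolding reach_def
proof (induction rule: rtranclp_induct)
  case (step y z)
  then show ?case using sim_back unfolding reach_def by (meson rtranclp_trans)
qed auto

lemma sim_fwd: "step N x y \<Longrightarrow> reach N' x y"
proof -
  assume "step N x y"
  then obtain t where en: "enabled N t x" and y: "y = fire N t x" unfolding step_def by auto
  show ?thesis
  proof (cases "t = tstar")
    case True
    have pre: "Pre \<subseteq># x" using en True unfolding enabled_def Pre_def by auto
    have s1: "step N' x (x - Pre + {#ps#})" unfolding step_def enabled_def fire_def
      using pre pre_ti post_ti trans' Pre_def by auto
    have s2: "step N' (x - Pre + {#ps#}) (x - Pre + Post)" unfolding step_def enabled_def fire_def
      using pre_to post_to trans' Post_def by auto
    have "y = x - Pre + Post" using y True unfolding fire_def Pre_def Post_def by auto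
    then show ?thesis using s1 s2 unfolding reach_def by auto
  next
    case False
    have t: "t \<in> trans N" using en unfolding enabled_def by auto
    have "step N' x y" unfolding step_def enabled_def fire_def
      using en y t False pre_t post_t trans' unfolding enabled_def fire_def by auto
    then show ?thesis unfolding reach_def by auto
  qed
qed

lemma reach_fwd: "reach N a b \<Longrightarrow> reach N' a b"
  unfolding reach_def
proof (induction rule: rtranclp_induct)
  case (step y z)
  then show ?case using sim_fwd unfolding reach_def by (meson rtranclp_trans)
qed auto

lemma to_rep: "reach N' (m + replicate_mset n ps) (m + repeat_mset n Post)"
proof (induction n arbitrary: m)
  case (Suc n)
  have "step N' (m + replicate_mset (Suc n) ps) (m + Post + replicate_mset n ps)"
  proof -
    have e: "enabled N' to (m + replicate_mset (Suc n) ps)"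
      unfolding enabled_def using pre_to trans' by simp
    have "fire N' to (m + replicate_mset (Suc n) ps) = m + Post + replicate_mset n ps"
      unfolding fire_def pre_to post_to Post_def by simp
    then show ?thesis using e unfolding step_def by metis
  qed
  moreover have "reach N' (m + Post + replicate_mset n ps) (m + Post + repeat_mset n Post)"
    using Suc by blast
  ultimately show ?case unfolding reach_def by (simp add: algebra_simps)
qed (simp add: reach_def)

lemma to_h: "reach N' m (h m)"
proof -
  have "m = filter_mset (\<lambda>x. x \<noteq> ps) m + replicate_mset (count m ps) ps"
    unfolding multiset_eq_iff by auto
  then show ?thesis using to_rep[of "filter_mset (\<lambda>x. x \<noteq> ps) m" "count m ps"] unfolding h_def
    by metis
qed

lemma main:
  assumes "sub_sound N" "inp N \<subseteq> places N" "outp N \<subseteq> places N"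
  shows "sub_sound N'"
proof -
  have io: "inp N' = inp N" "outp N' = outp N"
    using assms(2,3) tstar disj unfolding N'_def tsubst_def by auto
  have fin: "finite (inp N)" "finite (outp N)" using assms(2,3) pn unfolding petri_net_def
    by (auto intro: finite_subset)
  have hI: "h (repeat_mset k (mset_set (inp N))) = repeat_mset k (mset_set (inp N))" for k
  proof (rule h_id)
    have "ps \<notin># mset_set (inp N)" using ps assms(2) fin by auto
    then show "ps \<notin># repeat_mset k (mset_set (inp N))" by (simp add: count_eq_zero_iff[symmetric])
  qed
  have hO: "h (repeat_mset k (mset_set (outp N))) = repeat_mset k (mset_set (outp N))" for k
  proof (rule h_id)
    have "ps \<notin># mset_set (outp N)" using ps assms(3) fin by auto
    then show "ps \<notin># repeat_mset k (mset_set (outp N))" by (simp add: count_eq_zero_iff[symmetric])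
  qed
  show ?thesis unfolding sub_sound_def io
  proof (intro allI impI)
    fix k k' m'
    assume kk: "k' \<le> k" and r: "reach N' (repeat_mset k (mset_set (inp N))) (m' + repeat_mset k' (mset_set (outp N)))"
    from reach_back[OF r] have "reach N (repeat_mset k (mset_set (inp N))) (h m' + repeat_mset k' (mset_set (outp N)))"
      by (simp add: hI hO h_add)
    with assms(1) kk have "reach N (h m') (repeat_mset (k - k') (mset_set (outp N)))"
      unfolding sub_sound_def by blast
    from reach_fwd[OF this] to_h[of m'] show "reach N' m' (repeat_mset (k - k') (mset_set (outp N)))"
      unfolding reach_def by auto
  qed
qed

end
theorem mainTheorem10:
  fixes N :: "'a wf_net" and tstar ps ti to :: 'a
  assumes "pWF N"
    and "tstar \<in> trans N"
    and "ps \<notin> places N \<union> trans N"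
    and "ti \<notin> places N \<union> trans N"
    and "to \<notin> places N \<union> trans N"
    and "distinct [ps, ti, to]"
    and "sub_sound N"
  shows "sub_sound (tsubst N tstar (tc (single_place_net ps) ti to))"
proof -
  interpret ss N tstar ps ti to
    using assms unfolding pWF_def by unfold_locales auto
  show ?thesis using main[OF assms(7)] assms(1) unfolding pWF_def N'_def by auto
qed

end
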